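(* Let $\mathcal P$ be a 2-reflex orthostack made of three bricks with canonical contact rectangles, whose signature is neither of the form $\sqcap_i\sqcap_4$ nor of the form $\sqcup_4\sqcup_i$ ($i\in\{1,2,3,4\}$). Then $\mathcal P$ is guarded by one closed face guard that is neither the topmost nor the bottommost horizontal face of $\mathcal P$.
   Context: A 2-reflex orthostack is an orthogonal polyhedron with no reflex edge parallel to the vertical ($z$) axis all of whose horizontal cross-sections are simply connected; it is a stack of bricks $B_t=R_t\times[z_{t-1},z_t]$, $t=1,\dots,k$ (bottom to top), $z_0<\dots<z_k$, each $R_t$ an axis-parallel rectangle, $R_t\ne R_{t+1}$. The contact rectangle between $B_t$ and $B_{t+1}$ is $(R_t\cap R_{t+1})\times\{z_t\}$; it is canonical if one of $R_t,R_{t+1}$ is strictly contained in the other and their set difference is connected. The type of a canonical contact rectangle is the number $i\in\{1,2,3,4\}$ of sides of the smaller rectangle not contained in the boundary of the larger one. The contact is denoted $\sqcup_i$ if $R_t\subsetneq R_{t+1}$ and $\sqcap_i$ if $R_{t+1}\subsetneq R_t$. The signature is the sequence of these symbols for $t=1,\dots,k-1$, read bottom to top. A point $x$ is visible to $y$ if segment $xy$ does not meet the exterior of the polyhedron; a closed face guard is a face including its boundary; it guards the polyhedron if every point is visible from some point of it. *)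

theory Defs
  imports "HOL-Analysis.Analysis"
begin

type_synonym point3 = "real \<times> real \<times> real"

type_synonym rectc = "real \<times> real \<times> real \<times> real"

definition rset :: "rectc \<Rightarrow> (real \<times> real) set" where
  "rset r = (case r of (x1, x2, y1, y2) \<Rightarrow> {x1..x2} \<times> {y1..y2})"

definition nondeg :: "rectc \<Rightarrow> bool" where
  "nondeg r = (case r of (x1, x2, y1, y2) \<Rightarrow> x1 < x2 \<and> y1 < y2)"

definition side :: "rectc \<Rightarrow> nat \<Rightarrow> (real \<times> real) set" where
  "side r i = (case r of (x1, x2, y1, y2) \<Rightarrow>
     (if i = 0 then {x1} \<times> {y1..y2}
      else if i = 1 then {x2} \<times> {y1..y2}
      else if i = 2 then {x1..x2} \<times> {y1}
      else {x1..x2} \<times> {y2}))"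

definition canonical :: "rectc \<Rightarrow> rectc \<Rightarrow> bool" where
  "canonical r s =
     ((rset r \<subset> rset s \<and> connected (rset s - rset r)) \<or>
      (rset s \<subset> rset r \<and> connected (rset r - rset s)))"

definition ctype :: "rectc \<Rightarrow> rectc \<Rightarrow> nat" where
  "ctype small big = card {i \<in> {0..3::nat}. \<not> side small i \<subseteq> frontier (rset big)}"

datatype contact = Cup nat | Cap nat

text \<open>Contact symbol between lower rectangle r and upper rectangle s.\<close>
definition contact_sym :: "rectc \<Rightarrow> rectc \<Rightarrow> contact" where
  "contact_sym r s = (if rset r \<subset> rset s then Cup (ctype r s) else Cap (ctype s r))"

definition brick :: "rectc \<Rightarrow> real \<Rightarrow> real \<Rightarrow> point3 set" where
  "brick r a b = {(x, y, z). (x, y) \<in> rset r \<and> z \<in> {a..b}}"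

definition coord :: "nat \<Rightarrow> point3 \<Rightarrow> real" where
  "coord k p = (if k = 0 then fst p else if k = 1 then fst (snd p) else snd (snd p))"

definition flat_points :: "point3 set \<Rightarrow> point3 set" where
  "flat_points P = {p \<in> frontier P. \<exists>e>0. \<exists>k<3.
      ball p e \<inter> frontier P = ball p e \<inter> {q. coord k q = coord k p}}"

definition is_face :: "point3 set \<Rightarrow> point3 set \<Rightarrow> bool" where
  "is_face P F = (\<exists>C \<in> components (flat_points P). F = closure C)"

definition visible :: "point3 set \<Rightarrow> point3 \<Rightarrow> point3 \<Rightarrow> bool" where
  "visible P x y = (closed_segment x y \<subseteq> P)"

definition guards :: "point3 set \<Rightarrow> point3 set \<Rightarrow> bool" where
  "guards P F = (\<forall>p \<in> P. \<exists>q \<in> F. visible P q p)"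

end

theory Submission imports Defs begin

lemma local_frontier:
  assumes "open U" "U \<inter> A = U \<inter> B"
  shows "U \<inter> frontier A = U \<inter> frontier B"
proof -
  have c: "U \<inter> closure X = U \<inter> closure (U \<inter> X)" for X :: "'a set"
  proof
    show "U \<inter> closure X \<subseteq> U \<inter> closure (U \<inter> X)"
      using open_Int_closure_subset[OF assms(1), of X] by simp
    show "U \<inter> closure (U \<inter> X) \<subseteq> U \<inter> closure X"
      using closure_mono[of "U \<inter> X" X] by auto
  qed
  have i: "U \<inter> interior X = interior (U \<inter> X)" for X :: "'a set"
    by (simp add: interior_Int interior_open assms(1))
  have "U \<inter> frontier A = U \<inter> closure A - U \<inter> interior A" unfolding frontier_def by auto
  also have "\<dots> = U \<inter> closure (U \<inter> A) - interior (U \<inter> A)" by (simp only: c[of A] c[of B] i[of A] i[of B])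
  also have "\<dots> = U \<inter> closure (U \<inter> B) - interior (U \<inter> B)" by (simp only: assms(2))
  also have "\<dots> = U \<inter> closure B - U \<inter> interior B" by (simp only: c[of A] c[of B] i[of A] i[of B])
  also have "\<dots> = U \<inter> frontier B" unfolding frontier_def by auto
  finally show ?thesis .
qed

definition bas :: "nat \<Rightarrow> real \<times> real \<times> real" where
  "bas k = (if k = 0 then (1,0,0) else if k = 1 then (0,1,0) else (0,0,1))"

lemma coord_inner: "coord k q = bas k \<bullet> q"
  by (cases q) (auto simp: coord_def bas_def inner_Pair)

lemma bas_nz: "bas k \<noteq> 0"
  by (auto simp: bas_def zero_prod_def)

lemma flat_le:
  assumes "e > 0" "k < 3" "ball p e \<inter> P = ball p e \<inter> {q. coord k q \<le> coord k p}"
  shows "p \<in> flat_points P"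
proof -
  have "ball p e \<inter> frontier P = ball p e \<inter> frontier {q. coord k q \<le> coord k p}"
    by (rule local_frontier) (use assms in auto)
  also have "frontier {q. coord k q \<le> coord k p} = {q. coord k q = coord k p}"
    unfolding coord_inner using frontier_halfspace_le[of "bas k" "bas k \<bullet> p"] bas_nz by auto
  finally have *: "ball p e \<inter> frontier P = ball p e \<inter> {q. coord k q = coord k p}" .
  have "p \<in> ball p e \<inter> {q. coord k q = coord k p}" using assms(1) by simp
  then have fr: "p \<in> frontier P" using * by blast
  show ?thesis unfolding flat_points_def mem_Collect_eq
    apply (rule conjI[OF fr]) apply (rule exI[of _ e]) apply (rule conjI[OF assms(1)])
    apply (rule exI[of _ k]) using * assms(2) by simp
qed

lemma flat_ge:
  assumes "e > 0" "k < 3" "ball p e \<inter> P = ball p e \<inter> {q. coord k q \<ge> coord k p}"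
  shows "p \<in> flat_points P"
proof -
  have "ball p e \<inter> frontier P = ball p e \<inter> frontier {q. coord k q \<ge> coord k p}"
    by (rule local_frontier) (use assms in auto)
  also have "frontier {q. coord k q \<ge> coord k p} = {q. coord k q = coord k p}"
    unfolding coord_inner using frontier_halfspace_ge[of "bas k" "bas k \<bullet> p"] bas_nz by auto
  finally have *: "ball p e \<inter> frontier P = ball p e \<inter> {q. coord k q = coord k p}" .
  have "p \<in> ball p e \<inter> {q. coord k q = coord k p}" using assms(1) by simp
  then have fr: "p \<in> frontier P" using * by blast
  show ?thesis unfolding flat_points_def mem_Collect_eq
    apply (rule conjI[OF fr]) apply (rule exI[of _ e]) apply (rule conjI[OF assms(1)])
    apply (rule exI[of _ k]) using * assms(2) by simp
qed

lemma face_goal: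
  assumes "connected S" "S \<subseteq> flat_points P" "p0 \<in> S" "snd (snd p0) \<noteq> h3" "snd (snd p0) \<noteq> h0"
    and "\<forall>p\<in>P. \<exists>q\<in>closure S. visible P q p"
    and "\<forall>q\<in>T. snd (snd q) = h3" "\<forall>q\<in>B. snd (snd q) = h0"
  shows "\<exists>F. is_face P F \<and> F \<noteq> T \<and> F \<noteq> B \<and> guards P F"
proof -
  let ?C = "connected_component_set (flat_points P) p0"
  have C: "?C \<in> components (flat_points P)"
    using assms(2,3) by (auto simp: components_def)
  have SC: "S \<subseteq> ?C" by (rule connected_component_maximal) (use assms in auto)
  then have cl: "closure S \<subseteq> closure ?C" by (rule closure_mono)
  have p0: "p0 \<in> closure ?C" using cl assms(3) closure_subset by blast
  show ?thesis
  proof (intro exI conjI)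
    show "is_face P (closure ?C)" unfolding is_face_def using C by blast
    show "closure ?C \<noteq> T" using p0 assms(4,7) by auto
    show "closure ?C \<noteq> B" using p0 assms(5,8) by auto
    show "guards P (closure ?C)" unfolding guards_def using assms(6) cl by blast
  qed
qed

lemma visible_convex: "q \<in> K \<Longrightarrow> p \<in> K \<Longrightarrow> convex K \<Longrightarrow> K \<subseteq> P \<Longrightarrow> visible P q p"
  unfolding visible_def using closed_segment_subset by blast

definition box3 :: "real \<Rightarrow> real \<Rightarrow> real \<Rightarrow> real \<Rightarrow> real \<Rightarrow> real \<Rightarrow> (real\<times>real\<times>real) set" where
  "box3 a b c d l h = {a..b} \<times> {c..d} \<times> {l..h}"

lemma convex_box3: "convex (box3 a b c d l h)"
  unfolding box3_def by (intro convex_Times) auto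

lemma brick_eq: "brick (a,b,c,d) l h = box3 a b c d l h"
  by (auto simp: brick_def box3_def rset_def)

lemma mem_box3[simp]: "(x,y,w) \<in> box3 a b c d l h \<longleftrightarrow> a \<le> x \<and> x \<le> b \<and> c \<le> y \<and> y \<le> d \<and> l \<le> w \<and> w \<le> h"
  by (auto simp: box3_def)


lemma ball_coords:
  assumes "q \<in> ball p e"
  shows "\<bar>fst q - fst p\<bar> < e" "\<bar>fst (snd q) - fst (snd p)\<bar> < e" "\<bar>snd (snd q) - snd (snd p)\<bar> < e"
proof -
  have d: "dist p q < e" using assms by simp
  have 1: "dist (fst p) (fst q) \<le> dist p q" by (rule dist_fst_le)
  have 2: "dist (snd p) (snd q) \<le> dist p q" by (rule dist_snd_le)
  have 3: "dist (fst (snd p)) (fst (snd q)) \<le> dist (snd p) (snd q)" by (rule dist_fst_le)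
  have 4: "dist (snd (snd p)) (snd (snd q)) \<le> dist (snd p) (snd q)" by (rule dist_snd_le)
  show "\<bar>fst q - fst p\<bar> < e" using 1 d by (simp add: dist_real_def abs_minus_commute)
  show "\<bar>fst (snd q) - fst (snd p)\<bar> < e" using 2 3 d by (simp add: dist_real_def abs_minus_commute)
  show "\<bar>snd (snd q) - snd (snd p)\<bar> < e" using 2 4 d by (simp add: dist_real_def abs_minus_commute)
qed

lemma proj_dist: "dist (fst q, fst (snd q)) (fst p, fst (snd p)) \<le> dist q p"
proof -
  obtain qx qs px ps where q: "q = (qx, qs)" and p: "p = (px, ps)" by (cases q, cases p) auto
  have a: "dist (fst qs) (fst ps) \<le> dist qs ps" by (rule dist_fst_le)
  have "(dist (fst qs) (fst ps))\<^sup>2 \<le> (dist qs ps)\<^sup>2" using a by (simp add: power_mono)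
  then have "sqrt ((dist qx px)\<^sup>2 + (dist (fst qs) (fst ps))\<^sup>2) \<le> sqrt ((dist qx px)\<^sup>2 + (dist qs ps)\<^sup>2)"
    by simp
  then show ?thesis using q p by (simp add: dist_Pair_Pair)
qed

lemma rset_eq[simp]: "rset (a, b, c, d) = {a..b} \<times> {c..d}"
  by (simp add: rset_def)

lemma frontier_rect:
  fixes A B C D :: real
  assumes "A < B" "C < D"
  shows "w \<in> frontier ({A..B} \<times> {C..D}) \<longleftrightarrow>
     w \<in> {A..B} \<times> {C..D} \<and> \<not> (A < fst w \<and> fst w < B \<and> C < snd w \<and> snd w < D)"
proof -
  have "closed ({A..B} \<times> {C..D})" by (intro closed_Times closed_atLeastAtMost)
  then show ?thesis unfolding frontier_def
    by (cases w) (auto simp: interior_Times interior_atLeastAtMost_real)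
qed

lemma rect_sub:
  fixes a1 b1 c1 d1 a2 b2 c2 d2 :: real
  assumes "{a1..b1} \<times> {c1..d1} \<subseteq> {a2..b2} \<times> {c2..d2}" "a1 \<le> b1" "c1 \<le> d1"
  shows "a2 \<le> a1 \<and> b1 \<le> b2 \<and> c2 \<le> c1 \<and> d1 \<le> d2"
proof -
  have "(a1, c1) \<in> {a1..b1} \<times> {c1..d1}" "(b1, d1) \<in> {a1..b1} \<times> {c1..d1}" using assms(2,3) by auto
  then have "(a1, c1) \<in> {a2..b2} \<times> {c2..d2}" "(b1, d1) \<in> {a2..b2} \<times> {c2..d2}" using assms(1) by blast+
  then show ?thesis by auto
qed

lemma clos_D:
  fixes a2 b2 c2 d2 :: real
  assumes "a2 < b2" "c2 < d2" "closed K" "w \<in> {a2..b2} \<times> {c2..d2}" "w \<notin> K"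
  shows "w \<in> closure (({a2<..<b2} \<times> {c2<..<d2}) - K)"
proof -
  have "closure ({a2<..<b2} \<times> {c2<..<d2}) = {a2..b2} \<times> {c2..d2}"
    using assms by (simp add: closure_Times closure_greaterThanLessThan)
  then have "w \<in> (- K) \<inter> closure ({a2<..<b2} \<times> {c2<..<d2})" using assms by auto
  also have "\<dots> \<subseteq> closure (- K \<inter> ({a2<..<b2} \<times> {c2<..<d2}))"
    by (rule open_Int_closure_subset) (use assms in auto)
  also have "- K \<inter> ({a2<..<b2} \<times> {c2<..<d2}) = ({a2<..<b2} \<times> {c2<..<d2}) - K" by auto
  finally show ?thesis .
qed

lemma meet_D:
  fixes a1 b1 c1 d1 a2 b2 c2 d2 :: real
  assumes "a2 < b2" "c2 < d2" "a1 \<le> b1" "c1 \<le> d1"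
    and sub: "{a1..b1} \<times> {c1..d1} \<subset> {a2..b2} \<times> {c2..d2}"
  shows "\<exists>w \<in> {a1..b1} \<times> {c1..d1}. w \<in> closure (({a2<..<b2} \<times> {c2<..<d2}) - {a1..b1} \<times> {c1..d1})"
proof (rule ccontr)
  let ?K = "{a1..b1} \<times> {c1..d1}" and ?R = "{a2..b2} \<times> {c2..d2}"
  let ?D = "({a2<..<b2} \<times> {c2<..<d2}) - ?K"
  assume na: "\<not> ?thesis"
  have cK: "closed ?K" by (intro closed_Times closed_atLeastAtMost)
  have cR: "closed ?R" by (intro closed_Times closed_atLeastAtMost)
  have conR: "connected ?R" by (intro convex_connected convex_Times) auto
  have clO: "closure ({a2<..<b2} \<times> {c2<..<d2}) = ?R" using assms by (simp add: closure_Times closure_greaterThanLessThan)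
  have "closure ?D \<subseteq> closure ({a2<..<b2} \<times> {c2<..<d2})" by (rule closure_mono) auto
  then have clD: "closure ?D \<subseteq> ?R" using clO by simp
  have un: "?K \<union> closure ?D = ?R"
  proof
    show "?K \<union> closure ?D \<subseteq> ?R" using sub clD by auto
    show "?R \<subseteq> ?K \<union> closure ?D"
      using clos_D[OF assms(1,2) cK] by blast
  qed
  obtain w where w: "w \<in> ?R" "w \<notin> ?K" using sub by auto
  have "w \<in> closure ?D" using clos_D[OF assms(1,2) cK w] .
  moreover have "?K \<noteq> {}" using assms by auto
  moreover have "?K \<inter> closure ?D = {}" using na by auto
  ultimately show False
    using conR cK un unfolding connected_closed_set[OF cR]
    by (metis closed_closure empty_iff)
qed

lemma conn_oo: "connected ({a<..<(b::real)} \<times> {c<..<(d::real)})"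
  by (intro convex_connected convex_Times convex_real_interval)

lemma conn_D:
  fixes a1 b1 c1 d1 a2 b2 c2 d2 :: real
  assumes nd: "a2 < b2" "c2 < d2" "a1 < b1" "c1 < d1"
    and s: "a2 \<le> a1" "b1 \<le> b2" "c2 \<le> c1" "d1 \<le> d2"
    and con: "connected ({a2..b2} \<times> {c2..d2} - {a1..b1} \<times> {c1..d1})"
  shows "connected (({a2<..<b2} \<times> {c2<..<d2}) - {a1..b1} \<times> {c1..d1})"
proof -
  define L where "L = {a2<..<a1} \<times> {c2<..<d2}"
  define Rt where "Rt = {b1<..<b2} \<times> {c2<..<d2}"
  define Bo where "Bo = {a2<..<b2} \<times> {c2<..<c1}"
  define T where "T = {a2<..<b2} \<times> {d1<..<d2}"
  have cv: "connected L" "connected Rt" "connected Bo" "connected T"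
    unfolding L_def Rt_def Bo_def T_def by (simp_all add: conn_oo)
  have Deq: "({a2<..<b2} \<times> {c2<..<d2}) - {a1..b1} \<times> {c1..d1} = L \<union> Rt \<union> Bo \<union> T"
    unfolding L_def Rt_def Bo_def T_def using s nd by auto
  have E1: "\<not> (a2 < a1 \<and> b1 < b2 \<and> c1 = c2 \<and> d1 = d2)"
  proof
    assume h: "a2 < a1 \<and> b1 < b2 \<and> c1 = c2 \<and> d1 = d2"
    have "\<not> connected ({a2..b2} \<times> {c2..d2} - {a1..b1} \<times> {c1..d1})"
      unfolding connected_def
    proof (intro notI, elim notE, intro exI conjI)
      show "open {w::real\<times>real. fst w < a1}" by (intro open_Collect_less continuous_intros)
      show "open {w::real\<times>real. b1 < fst w}" by (intro open_Collect_less continuous_intros)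
      show "{a2..b2} \<times> {c2..d2} - {a1..b1} \<times> {c1..d1} \<subseteq> {w. fst w < a1} \<union> {w. b1 < fst w}"
        using h by auto
      show "{w::real\<times>real. fst w < a1} \<inter> {w. b1 < fst w} \<inter> ({a2..b2} \<times> {c2..d2} - {a1..b1} \<times> {c1..d1}) = {}"
        using nd by auto
      have "(a2, c2) \<in> {w. fst w < a1} \<inter> ({a2..b2} \<times> {c2..d2} - {a1..b1} \<times> {c1..d1})"
        using h nd by auto
      then show "{w. fst w < a1} \<inter> ({a2..b2} \<times> {c2..d2} - {a1..b1} \<times> {c1..d1}) \<noteq> {}" by blast
      have "(b2, c2) \<in> {w. b1 < fst w} \<inter> ({a2..b2} \<times> {c2..d2} - {a1..b1} \<times> {c1..d1})"
        using h nd by auto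
      then show "{w. b1 < fst w} \<inter> ({a2..b2} \<times> {c2..d2} - {a1..b1} \<times> {c1..d1}) \<noteq> {}" by blast
    qed
    then show False using con by simp
  qed
  have E2: "\<not> (c2 < c1 \<and> d1 < d2 \<and> a1 = a2 \<and> b1 = b2)"
  proof
    assume h: "c2 < c1 \<and> d1 < d2 \<and> a1 = a2 \<and> b1 = b2"
    have "\<not> connected ({a2..b2} \<times> {c2..d2} - {a1..b1} \<times> {c1..d1})"
      unfolding connected_def
    proof (intro notI, elim notE, intro exI conjI)
      show "open {w::real\<times>real. snd w < c1}" by (intro open_Collect_less continuous_intros)
      show "open {w::real\<times>real. d1 < snd w}" by (intro open_Collect_less continuous_intros)
      show "{a2..b2} \<times> {c2..d2} - {a1..b1} \<times> {c1..d1} \<subseteq> {w. snd w < c1} \<union> {w. d1 < snd w}"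
        using h by auto
      show "{w::real\<times>real. snd w < c1} \<inter> {w. d1 < snd w} \<inter> ({a2..b2} \<times> {c2..d2} - {a1..b1} \<times> {c1..d1}) = {}"
        using nd by auto
      have "(a2, c2) \<in> {w. snd w < c1} \<inter> ({a2..b2} \<times> {c2..d2} - {a1..b1} \<times> {c1..d1})"
        using h nd by auto
      then show "{w. snd w < c1} \<inter> ({a2..b2} \<times> {c2..d2} - {a1..b1} \<times> {c1..d1}) \<noteq> {}" by blast
      have "(a2, d2) \<in> {w. d1 < snd w} \<inter> ({a2..b2} \<times> {c2..d2} - {a1..b1} \<times> {c1..d1})"
        using h nd by auto
      then show "{w. d1 < snd w} \<inter> ({a2..b2} \<times> {c2..d2} - {a1..b1} \<times> {c1..d1}) \<noteq> {}" by blast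
    qed
    then show False using con by simp
  qed
  have Le: "\<not> a2 < a1 \<Longrightarrow> L = {}" unfolding L_def by auto
  have Re: "\<not> b1 < b2 \<Longrightarrow> Rt = {}" unfolding Rt_def by auto
  have Be: "\<not> c2 < c1 \<Longrightarrow> Bo = {}" unfolding Bo_def by auto
  have Te: "\<not> d1 < d2 \<Longrightarrow> T = {}" unfolding T_def by auto
  have LB: "L \<inter> Bo \<noteq> {}" if "a2 < a1" "c2 < c1"
  proof -
    have "((a2+a1)/2, (c2+c1)/2) \<in> L \<inter> Bo" unfolding L_def Bo_def using nd s that by auto
    then show ?thesis by blast
  qed
  have LT: "L \<inter> T \<noteq> {}" if "a2 < a1" "d1 < d2"
  proof -
    have "((a2+a1)/2, (d1+d2)/2) \<in> L \<inter> T" unfolding L_def T_def using nd s that by auto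
    then show ?thesis by blast
  qed
  have RB: "Rt \<inter> Bo \<noteq> {}" if "b1 < b2" "c2 < c1"
  proof -
    have "((b1+b2)/2, (c2+c1)/2) \<in> Rt \<inter> Bo" unfolding Rt_def Bo_def using nd s that by auto
    then show ?thesis by blast
  qed
  have RT: "Rt \<inter> T \<noteq> {}" if "b1 < b2" "d1 < d2"
  proof -
    have "((b1+b2)/2, (d1+d2)/2) \<in> Rt \<inter> T" unfolding Rt_def T_def using nd s that by auto
    then show ?thesis by blast
  qed
  have Bne: "c2 < c1 \<Longrightarrow> Bo \<noteq> {}" unfolding Bo_def using nd
    by (auto simp: ex_in_conv[symmetric] intro!: exI[of _ "((a2+b2)/2, (c2+c1)/2)"])
  have Tne: "d1 < d2 \<Longrightarrow> T \<noteq> {}" unfolding T_def using nd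
    by (auto simp: ex_in_conv[symmetric] intro!: exI[of _ "((a2+b2)/2, (d1+d2)/2)"])
  have cLY: "connected (L \<union> Bo \<union> T)" if "a2 < a1"
  proof -
    have "connected (L \<union> Bo)"
      using cv LB[OF that] Be by (cases "c2 < c1") (auto intro: connected_Un)
    then show ?thesis
      using cv LT[OF that] Te by (cases "d1 < d2") (auto intro: connected_Un)
  qed
  have cRY: "connected (Rt \<union> Bo \<union> T)" if "b1 < b2"
  proof -
    have "connected (Rt \<union> Bo)"
      using cv RB[OF that] Be by (cases "c2 < c1") (auto intro: connected_Un)
    then show ?thesis
      using cv RT[OF that] Te by (cases "d1 < d2") (auto intro: connected_Un)
  qed
  have "connected (L \<union> Rt \<union> Bo \<union> T)"
  proof (cases "a2 < a1"; cases "b1 < b2")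
    assume a: "a2 < a1" and b: "b1 < b2"
    have "Bo \<union> T \<noteq> {}" using E1 a b s Bne Tne by force
    then have "(L \<union> Bo \<union> T) \<inter> (Rt \<union> Bo \<union> T) \<noteq> {}" by auto
    then have "connected ((L \<union> Bo \<union> T) \<union> (Rt \<union> Bo \<union> T))"
      using cLY[OF a] cRY[OF b] by (rule connected_Un[rotated 2])
    then show ?thesis by (simp add: Un_ac)
  next
    assume a: "a2 < a1" and b: "\<not> b1 < b2"
    then show ?thesis using cLY[OF a] Re[OF b] by (simp add: Un_ac)
  next
    assume a: "\<not> a2 < a1" and b: "b1 < b2"
    then show ?thesis using cRY[OF b] Le[OF a] by (simp add: Un_ac)
  next
    assume a: "\<not> a2 < a1" and b: "\<not> b1 < b2"
    have "\<not> (c2 < c1 \<and> d1 < d2)" using E2 a b s by auto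
    then have "Bo = {} \<or> T = {}" using Be Te by auto
    then show ?thesis using cv Le[OF a] Re[OF b] by auto
  qed
  then show ?thesis using Deq by simp
qed


lemma side_eq: "side (a, b, c, d) i = (if i = 0 then {a} \<times> {c..d} else if i = 1 then {b} \<times> {c..d}
    else if i = 2 then {a..b} \<times> {c} else {a..b} \<times> {d})"
  by (simp add: side_def)

lemma ctype_le4: "ctype s t \<le> 4"
proof -
  have "ctype s t \<le> card {0..3::nat}" unfolding ctype_def by (rule card_mono) auto
  then show ?thesis by simp
qed

lemma ctype_not4:
  fixes a b c d :: real
  assumes "a < b" "c < d" "ctype (a, b, c, d) t \<noteq> 4"
  shows "\<exists>w \<in> {a..b} \<times> {c..d}. w \<in> frontier (rset t)"
proof (rule ccontr)
  assume no: "\<not> ?thesis"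
  have "\<not> side (a, b, c, d) i \<subseteq> frontier (rset t)" if i: "i \<in> {0..3::nat}" for i
  proof
    assume h: "side (a, b, c, d) i \<subseteq> frontier (rset t)"
    define p where "p = (if i = 1 then (b, c) else if i = 3 then (a, d) else (a, c))"
    have "p \<in> side (a, b, c, d) i" using assms i unfolding p_def side_eq by auto
    moreover have "p \<in> {a..b} \<times> {c..d}" using assms unfolding p_def by auto
    ultimately show False using h no by blast
  qed
  then have "{i \<in> {0..3::nat}. \<not> side (a, b, c, d) i \<subseteq> frontier (rset t)} = {0..3}" by auto
  then show False using assms(3) unfolding ctype_def by simp
qed

lemma ctype_not0:
  fixes a b c d A B C D :: real
  assumes "a < b" "c < d" "A < B" "C < D" "{a..b} \<times> {c..d} \<subset> {A..B} \<times> {C..D}"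
  shows "ctype (a, b, c, d) (A, B, C, D) \<noteq> 0"
proof -
  have s: "A \<le> a" "b \<le> B" "C \<le> c" "d \<le> D" using rect_sub[of a b c d A B C D] assms by auto
  have ne: "A < a \<or> b < B \<or> C < c \<or> d < D"
  proof (rule ccontr)
    assume "\<not> ?thesis"
    then have "A = a" "b = B" "C = c" "d = D" using s by auto
    then show False using assms(5) by auto
  qed
  have "\<exists>i \<in> {0..3::nat}. \<not> side (a, b, c, d) i \<subseteq> frontier ({A..B} \<times> {C..D})"
  proof -
    { assume h: "A < a"
      have "(a, (c+d)/2) \<in> side (a, b, c, d) 0" using assms by (simp add: side_eq)
      moreover have "(a, (c+d)/2) \<notin> frontier ({A..B} \<times> {C..D})"
        using frontier_rect[OF assms(3,4)] h s assms by auto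
      ultimately have ?thesis by (intro bexI[of _ 0]) auto }
    moreover
    { assume h: "b < B"
      have "(b, (c+d)/2) \<in> side (a, b, c, d) 1" using assms by (simp add: side_eq)
      moreover have "(b, (c+d)/2) \<notin> frontier ({A..B} \<times> {C..D})"
        using frontier_rect[OF assms(3,4)] h s assms by auto
      ultimately have ?thesis by (intro bexI[of _ 1]) auto }
    moreover
    { assume h: "C < c"
      have "((a+b)/2, c) \<in> side (a, b, c, d) 2" using assms by (simp add: side_eq)
      moreover have "((a+b)/2, c) \<notin> frontier ({A..B} \<times> {C..D})"
        using frontier_rect[OF assms(3,4)] h s assms by auto
      ultimately have ?thesis by (intro bexI[of _ 2]) auto }
    moreover
    { assume h: "d < D"
      have "((a+b)/2, d) \<in> side (a, b, c, d) 3" using assms by (simp add: side_eq)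
      moreover have "((a+b)/2, d) \<notin> frontier ({A..B} \<times> {C..D})"
        using frontier_rect[OF assms(3,4)] h s assms by auto
      ultimately have ?thesis by (intro bexI[of _ 3]) auto }
    ultimately show ?thesis using ne by blast
  qed
  then have "{i \<in> {0..3::nat}. \<not> side (a, b, c, d) i \<subseteq> frontier (rset (A, B, C, D))} \<noteq> {}" by auto
  then show ?thesis unfolding ctype_def by simp
qed

locale stk =
  fixes a1 b1 c1 d1 a2 b2 c2 d2 a3 b3 c3 d3 z0 z1 z2 z3 :: real and P :: "point3 set"
  assumes nd: "a1 < b1" "c1 < d1" "a2 < b2" "c2 < d2" "a3 < b3" "c3 < d3"
    and zs: "z0 < z1" "z1 < z2" "z2 < z3"
    and Pd: "P = box3 a1 b1 c1 d1 z0 z1 \<union> box3 a2 b2 c2 d2 z1 z2 \<union> box3 a3 b3 c3 d3 z2 z3"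
begin

abbreviation GOAL where "GOAL \<equiv> \<exists>F. is_face P F \<and> F \<noteq> box3 a3 b3 c3 d3 z3 z3 \<and>
   F \<noteq> box3 a1 b1 c1 d1 z0 z0 \<and> guards P F"

lemma goalI:
  assumes "connected S" "S \<subseteq> flat_points P" "p0 \<in> S" "z0 < snd (snd p0)" "snd (snd p0) < z3"
    "\<forall>p\<in>P. \<exists>q\<in>closure S. visible P q p"
  shows GOAL
  by (rule face_goal[OF assms(1-3) _ _ assms(6)]) (use assms(4,5) in \<open>auto simp: box3_def\<close>)

lemma sub1: "box3 a1 b1 c1 d1 z0 z1 \<subseteq> P" and sub2: "box3 a2 b2 c2 d2 z1 z2 \<subseteq> P"
  and sub3: "box3 a3 b3 c3 d3 z2 z3 \<subseteq> P"
  using Pd by auto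

lemma side_a:
  assumes "a1 \<le> a2" "a2 \<le> b1" "c1 \<le> u" "u \<le> d1" "c2 \<le> u" "u \<le> d2"
   and "a3 \<le> a2" "a2 \<le> b3" "c3 \<le> v" "v \<le> d3" "c2 \<le> v" "v \<le> d2"
  shows GOAL
proof -
  define S where "S = {a2} \<times> {c2<..<d2} \<times> {z1<..<z2}"
  have conn: "connected S" unfolding S_def
    by (intro convex_connected convex_Times) auto
  have clS: "closure S = {a2} \<times> {c2..d2} \<times> {z1..z2}"
    unfolding S_def using nd zs by (simp add: closure_Times)
  have flat: "S \<subseteq> flat_points P"
  proof
    fix p assume "p \<in> S"
    then obtain y w where p: "p = (a2, y, w)" and y: "c2 < y" "y < d2" and w: "z1 < w" "w < z2"
      unfolding S_def by auto
    define e where "e = min (min (y - c2) (d2 - y)) (min (min (w - z1) (z2 - w)) (b2 - a2))"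
    have e: "e > 0" "e \<le> y - c2" "e \<le> d2 - y" "e \<le> w - z1" "e \<le> z2 - w" "e \<le> b2 - a2"
      unfolding e_def using y w nd by auto
    have "ball p e \<inter> P = ball p e \<inter> {q. coord 0 p \<le> coord 0 q}"
    proof (intro set_eqI iffI)
      fix q assume q: "q \<in> ball p e \<inter> P"
      obtain qx qy qw where qq: "q = (qx, qy, qw)" by (cases q) auto
      have b: "\<bar>qx - a2\<bar> < e" "\<bar>qy - y\<bar> < e" "\<bar>qw - w\<bar> < e"
        using ball_coords[of q p e] q qq p by auto
      show "q \<in> ball p e \<inter> {q. coord 0 p \<le> coord 0 q}"
        using q b e unfolding qq p Pd by (auto simp: coord_def abs_less_iff)
    next
      fix q assume q: "q \<in> ball p e \<inter> {q. coord 0 p \<le> coord 0 q}"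
      obtain qx qy qw where qq: "q = (qx, qy, qw)" by (cases q) auto
      have b: "\<bar>qx - a2\<bar> < e" "\<bar>qy - y\<bar> < e" "\<bar>qw - w\<bar> < e"
        using ball_coords[of q p e] q qq p by auto
      have "q \<in> box3 a2 b2 c2 d2 z1 z2"
        using q b e unfolding qq p by (auto simp: coord_def abs_less_iff)
      then show "q \<in> ball p e \<inter> P" using q Pd by auto
    qed
    then show "p \<in> flat_points P" using flat_ge[OF e(1), of 0 p P] by simp
  qed
  show GOAL
  proof (rule goalI[OF conn flat])
    show "(a2, (c2+d2)/2, (z1+z2)/2) \<in> S" unfolding S_def using nd zs by auto
    show "z0 < snd (snd (a2, (c2+d2)/2, (z1+z2)/2))" "snd (snd (a2, (c2+d2)/2, (z1+z2)/2)) < z3" using zs by auto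
    show "\<forall>p\<in>P. \<exists>q\<in>closure S. visible P q p"
    proof
      fix p assume "p \<in> P"
      then consider "p \<in> box3 a1 b1 c1 d1 z0 z1" | "p \<in> box3 a2 b2 c2 d2 z1 z2" | "p \<in> box3 a3 b3 c3 d3 z2 z3"
        using Pd by auto
      then show "\<exists>q\<in>closure S. visible P q p"
      proof cases
        case 1
        show ?thesis
          by (rule bexI[of _ "(a2, u, z1)"], rule visible_convex[OF _ 1 convex_box3 sub1])
            (use assms zs in \<open>auto simp: clS\<close>)
      next
        case 2
        show ?thesis
          by (rule bexI[of _ "(a2, u, z1)"], rule visible_convex[OF _ 2 convex_box3 sub2])
            (use assms zs nd in \<open>auto simp: clS\<close>)
      next
        case 3
        show ?thesis
          by (rule bexI[of _ "(a2, v, z2)"], rule visible_convex[OF _ 3 convex_box3 sub3])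
            (use assms zs in \<open>auto simp: clS\<close>)
      qed
    qed
  qed
qed

lemma side_b:
  assumes "a1 \<le> b2" "b2 \<le> b1" "c1 \<le> u" "u \<le> d1" "c2 \<le> u" "u \<le> d2"
   and "a3 \<le> b2" "b2 \<le> b3" "c3 \<le> v" "v \<le> d3" "c2 \<le> v" "v \<le> d2"
  shows GOAL
proof -
  define S where "S = {b2} \<times> {c2<..<d2} \<times> {z1<..<z2}"
  have conn: "connected S" unfolding S_def
    by (intro convex_connected convex_Times) auto
  have clS: "closure S = {b2} \<times> {c2..d2} \<times> {z1..z2}"
    unfolding S_def using nd zs by (simp add: closure_Times)
  have flat: "S \<subseteq> flat_points P"
  proof
    fix p assume "p \<in> S"
    then obtain y w where p: "p = (b2, y, w)" and y: "c2 < y" "y < d2" and w: "z1 < w" "w < z2"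
      unfolding S_def by auto
    define e where "e = min (min (y - c2) (d2 - y)) (min (min (w - z1) (z2 - w)) (b2 - a2))"
    have e: "e > 0" "e \<le> y - c2" "e \<le> d2 - y" "e \<le> w - z1" "e \<le> z2 - w" "e \<le> b2 - a2"
      unfolding e_def using y w nd by auto
    have "ball p e \<inter> P = ball p e \<inter> {q. coord 0 q \<le> coord 0 p}"
    proof (intro set_eqI iffI)
      fix q assume q: "q \<in> ball p e \<inter> P"
      obtain qx qy qw where qq: "q = (qx, qy, qw)" by (cases q) auto
      have b: "\<bar>qx - b2\<bar> < e" "\<bar>qy - y\<bar> < e" "\<bar>qw - w\<bar> < e"
        using ball_coords[of q p e] q qq p by auto
      show "q \<in> ball p e \<inter> {q. coord 0 q \<le> coord 0 p}"
        using q b e unfolding qq p Pd by (auto simp: coord_def abs_less_iff)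
    next
      fix q assume q: "q \<in> ball p e \<inter> {q. coord 0 q \<le> coord 0 p}"
      obtain qx qy qw where qq: "q = (qx, qy, qw)" by (cases q) auto
      have b: "\<bar>qx - b2\<bar> < e" "\<bar>qy - y\<bar> < e" "\<bar>qw - w\<bar> < e"
        using ball_coords[of q p e] q qq p by auto
      have "q \<in> box3 a2 b2 c2 d2 z1 z2"
        using q b e unfolding qq p by (auto simp: coord_def abs_less_iff)
      then show "q \<in> ball p e \<inter> P" using q Pd by auto
    qed
    then show "p \<in> flat_points P" using flat_le[OF e(1), of 0 p P] by simp
  qed
  show GOAL
  proof (rule goalI[OF conn flat])
    show "(b2, (c2+d2)/2, (z1+z2)/2) \<in> S" unfolding S_def using nd zs by auto
    show "z0 < snd (snd (b2, (c2+d2)/2, (z1+z2)/2))" "snd (snd (b2, (c2+d2)/2, (z1+z2)/2)) < z3" using zs by auto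
    show "\<forall>p\<in>P. \<exists>q\<in>closure S. visible P q p"
    proof
      fix p assume "p \<in> P"
      then consider "p \<in> box3 a1 b1 c1 d1 z0 z1" | "p \<in> box3 a2 b2 c2 d2 z1 z2" | "p \<in> box3 a3 b3 c3 d3 z2 z3"
        using Pd by auto
      then show "\<exists>q\<in>closure S. visible P q p"
      proof cases
        case 1
        show ?thesis
          by (rule bexI[of _ "(b2, u, z1)"], rule visible_convex[OF _ 1 convex_box3 sub1])
            (use assms zs in \<open>auto simp: clS\<close>)
      next
        case 2
        show ?thesis
          by (rule bexI[of _ "(b2, u, z1)"], rule visible_convex[OF _ 2 convex_box3 sub2])
            (use assms zs nd in \<open>auto simp: clS\<close>)
      next
        case 3
        show ?thesis
          by (rule bexI[of _ "(b2, v, z2)"], rule visible_convex[OF _ 3 convex_box3 sub3])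
            (use assms zs in \<open>auto simp: clS\<close>)
      qed
    qed
  qed
qed

lemma side_c:
  assumes "c1 \<le> c2" "c2 \<le> d1" "a1 \<le> u" "u \<le> b1" "a2 \<le> u" "u \<le> b2"
   and "c3 \<le> c2" "c2 \<le> d3" "a3 \<le> v" "v \<le> b3" "a2 \<le> v" "v \<le> b2"
  shows GOAL
proof -
  define S where "S = {a2<..<b2} \<times> {c2} \<times> {z1<..<z2}"
  have conn: "connected S" unfolding S_def
    by (intro convex_connected convex_Times) auto
  have clS: "closure S = {a2..b2} \<times> {c2} \<times> {z1..z2}"
    unfolding S_def using nd zs by (simp add: closure_Times)
  have flat: "S \<subseteq> flat_points P"
  proof
    fix p assume "p \<in> S"
    then obtain y w where p: "p = (y, c2, w)" and y: "a2 < y" "y < b2" and w: "z1 < w" "w < z2"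
      unfolding S_def by auto
    define e where "e = min (min (y - a2) (b2 - y)) (min (min (w - z1) (z2 - w)) (d2 - c2))"
    have e: "e > 0" "e \<le> y - a2" "e \<le> b2 - y" "e \<le> w - z1" "e \<le> z2 - w" "e \<le> d2 - c2"
      unfolding e_def using y w nd by auto
    have "ball p e \<inter> P = ball p e \<inter> {q. coord 1 p \<le> coord 1 q}"
    proof (intro set_eqI iffI)
      fix q assume q: "q \<in> ball p e \<inter> P"
      obtain qx qy qw where qq: "q = (qx, qy, qw)" by (cases q) auto
      have b: "\<bar>qx - y\<bar> < e" "\<bar>qy - c2\<bar> < e" "\<bar>qw - w\<bar> < e"
        using ball_coords[of q p e] q qq p by auto
      show "q \<in> ball p e \<inter> {q. coord 1 p \<le> coord 1 q}"
        using q b e unfolding qq p Pd by (auto simp: coord_def abs_less_iff)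
    next
      fix q assume q: "q \<in> ball p e \<inter> {q. coord 1 p \<le> coord 1 q}"
      obtain qx qy qw where qq: "q = (qx, qy, qw)" by (cases q) auto
      have b: "\<bar>qx - y\<bar> < e" "\<bar>qy - c2\<bar> < e" "\<bar>qw - w\<bar> < e"
        using ball_coords[of q p e] q qq p by auto
      have "q \<in> box3 a2 b2 c2 d2 z1 z2"
        using q b e unfolding qq p by (auto simp: coord_def abs_less_iff)
      then show "q \<in> ball p e \<inter> P" using q Pd by auto
    qed
    then show "p \<in> flat_points P" using flat_ge[OF e(1), of 1 p P] by simp
  qed
  show GOAL
  proof (rule goalI[OF conn flat])
    show "((a2+b2)/2, c2, (z1+z2)/2) \<in> S" unfolding S_def using nd zs by auto
    show "z0 < snd (snd ((a2+b2)/2, c2, (z1+z2)/2))" "snd (snd ((a2+b2)/2, c2, (z1+z2)/2)) < z3" using zs by auto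
    show "\<forall>p\<in>P. \<exists>q\<in>closure S. visible P q p"
    proof
      fix p assume "p \<in> P"
      then consider "p \<in> box3 a1 b1 c1 d1 z0 z1" | "p \<in> box3 a2 b2 c2 d2 z1 z2" | "p \<in> box3 a3 b3 c3 d3 z2 z3"
        using Pd by auto
      then show "\<exists>q\<in>closure S. visible P q p"
      proof cases
        case 1
        show ?thesis
          by (rule bexI[of _ "(u, c2, z1)"], rule visible_convex[OF _ 1 convex_box3 sub1])
            (use assms zs in \<open>auto simp: clS\<close>)
      next
        case 2
        show ?thesis
          by (rule bexI[of _ "(u, c2, z1)"], rule visible_convex[OF _ 2 convex_box3 sub2])
            (use assms zs nd in \<open>auto simp: clS\<close>)
      next
        case 3
        show ?thesis
          by (rule bexI[of _ "(v, c2, z2)"], rule visible_convex[OF _ 3 convex_box3 sub3])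
            (use assms zs in \<open>auto simp: clS\<close>)
      qed
    qed
  qed
qed

lemma side_d:
  assumes "c1 \<le> d2" "d2 \<le> d1" "a1 \<le> u" "u \<le> b1" "a2 \<le> u" "u \<le> b2"
   and "c3 \<le> d2" "d2 \<le> d3" "a3 \<le> v" "v \<le> b3" "a2 \<le> v" "v \<le> b2"
  shows GOAL
proof -
  define S where "S = {a2<..<b2} \<times> {d2} \<times> {z1<..<z2}"
  have conn: "connected S" unfolding S_def
    by (intro convex_connected convex_Times) auto
  have clS: "closure S = {a2..b2} \<times> {d2} \<times> {z1..z2}"
    unfolding S_def using nd zs by (simp add: closure_Times)
  have flat: "S \<subseteq> flat_points P"
  proof
    fix p assume "p \<in> S"
    then obtain y w where p: "p = (y, d2, w)" and y: "a2 < y" "y < b2" and w: "z1 < w" "w < z2"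
      unfolding S_def by auto
    define e where "e = min (min (y - a2) (b2 - y)) (min (min (w - z1) (z2 - w)) (d2 - c2))"
    have e: "e > 0" "e \<le> y - a2" "e \<le> b2 - y" "e \<le> w - z1" "e \<le> z2 - w" "e \<le> d2 - c2"
      unfolding e_def using y w nd by auto
    have "ball p e \<inter> P = ball p e \<inter> {q. coord 1 q \<le> coord 1 p}"
    proof (intro set_eqI iffI)
      fix q assume q: "q \<in> ball p e \<inter> P"
      obtain qx qy qw where qq: "q = (qx, qy, qw)" by (cases q) auto
      have b: "\<bar>qx - y\<bar> < e" "\<bar>qy - d2\<bar> < e" "\<bar>qw - w\<bar> < e"
        using ball_coords[of q p e] q qq p by auto
      show "q \<in> ball p e \<inter> {q. coord 1 q \<le> coord 1 p}"
        using q b e unfolding qq p Pd by (auto simp: coord_def abs_less_iff)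
    next
      fix q assume q: "q \<in> ball p e \<inter> {q. coord 1 q \<le> coord 1 p}"
      obtain qx qy qw where qq: "q = (qx, qy, qw)" by (cases q) auto
      have b: "\<bar>qx - y\<bar> < e" "\<bar>qy - d2\<bar> < e" "\<bar>qw - w\<bar> < e"
        using ball_coords[of q p e] q qq p by auto
      have "q \<in> box3 a2 b2 c2 d2 z1 z2"
        using q b e unfolding qq p by (auto simp: coord_def abs_less_iff)
      then show "q \<in> ball p e \<inter> P" using q Pd by auto
    qed
    then show "p \<in> flat_points P" using flat_le[OF e(1), of 1 p P] by simp
  qed
  show GOAL
  proof (rule goalI[OF conn flat])
    show "((a2+b2)/2, d2, (z1+z2)/2) \<in> S" unfolding S_def using nd zs by auto
    show "z0 < snd (snd ((a2+b2)/2, d2, (z1+z2)/2))" "snd (snd ((a2+b2)/2, d2, (z1+z2)/2)) < z3" using zs by auto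
    show "\<forall>p\<in>P. \<exists>q\<in>closure S. visible P q p"
    proof
      fix p assume "p \<in> P"
      then consider "p \<in> box3 a1 b1 c1 d1 z0 z1" | "p \<in> box3 a2 b2 c2 d2 z1 z2" | "p \<in> box3 a3 b3 c3 d3 z2 z3"
        using Pd by auto
      then show "\<exists>q\<in>closure S. visible P q p"
      proof cases
        case 1
        show ?thesis
          by (rule bexI[of _ "(u, d2, z1)"], rule visible_convex[OF _ 1 convex_box3 sub1])
            (use assms zs in \<open>auto simp: clS\<close>)
      next
        case 2
        show ?thesis
          by (rule bexI[of _ "(u, d2, z1)"], rule visible_convex[OF _ 2 convex_box3 sub2])
            (use assms zs nd in \<open>auto simp: clS\<close>)
      next
        case 3
        show ?thesis
          by (rule bexI[of _ "(v, d2, z2)"], rule visible_convex[OF _ 3 convex_box3 sub3])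
            (use assms zs in \<open>auto simp: clS\<close>)
      qed
    qed
  qed
qed

lemma annulus_bot:
  assumes s1: "a2 \<le> a1" "b1 \<le> b2" "c2 \<le> c1" "d1 \<le> d2"
    and s3: "a2 \<le> a3" "b3 \<le> b2" "c2 \<le> c3" "d3 \<le> d2"
    and conD: "connected D" and Dd: "D = ({a2<..<b2} \<times> {c2<..<d2}) - {a1..b1} \<times> {c1..d1}"
    and w1: "w1 \<in> {a1..b1} \<times> {c1..d1}" "w1 \<in> closure D"
    and w3: "w3 \<in> {a3..b3} \<times> {c3..d3}" "w3 \<in> closure D"
  shows GOAL
proof -
  define f where "f = (\<lambda>w::real\<times>real. (fst w, snd w, z1))"
  have cf: "continuous_on A f" for A unfolding f_def by (intro continuous_intros)
  define S where "S = f ` D"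
  have conn: "connected S" unfolding S_def by (rule connected_continuous_image[OF cf conD])
  have clS: "f ` closure D \<subseteq> closure S" unfolding S_def
    by (rule continuous_image_closure_subset[OF cf[of UNIV]]) simp
  have "D \<noteq> {}" using w1(2) by auto
  then obtain d0 where d0: "d0 \<in> D" by auto
  have cR1: "closed ({a1..b1} \<times> {c1..d1})" by (intro closed_Times) auto
  have flat: "S \<subseteq> flat_points P"
  proof
    fix p assume "p \<in> S"
    then obtain x y where xy: "(x, y) \<in> D" and p: "p = (x, y, z1)" unfolding S_def f_def by auto
    have "(x, y) \<in> - ({a1..b1} \<times> {c1..d1})" using xy Dd by auto
    then obtain e1 where e1: "e1 > 0" "ball (x, y) e1 \<subseteq> - ({a1..b1} \<times> {c1..d1})"
      using cR1 open_contains_ball by (metis open_Compl)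
    have xyb: "a2 < x" "x < b2" "c2 < y" "y < d2" using xy Dd by auto
    define e where "e = min e1 (min (min (x - a2) (b2 - x)) (min (min (y - c2) (d2 - y)) (z2 - z1)))"
    have e: "e > 0" "e \<le> e1" "e \<le> x - a2" "e \<le> b2 - x" "e \<le> y - c2" "e \<le> d2 - y" "e \<le> z2 - z1"
      unfolding e_def using xyb zs e1 by auto
    have "ball p e \<inter> P = ball p e \<inter> {q. coord 2 p \<le> coord 2 q}"
    proof (intro set_eqI iffI)
      fix q assume q: "q \<in> ball p e \<inter> P"
      obtain qx qy qw where qq: "q = (qx, qy, qw)" by (cases q) auto
      have "dist (qx, qy) (x, y) \<le> dist q p" using proj_dist[of q p] qq p by simp
      also have "\<dots> < e" using q by (simp add: dist_commute)
      finally have "(qx, qy) \<in> ball (x, y) e1" using e by (simp add: dist_commute)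
      then have nR1: "(qx, qy) \<notin> {a1..b1} \<times> {c1..d1}" using e1 by auto
      show "q \<in> ball p e \<inter> {q. coord 2 p \<le> coord 2 q}"
        using q nR1 zs unfolding qq p Pd by (auto simp: coord_def)
    next
      fix q assume q: "q \<in> ball p e \<inter> {q. coord 2 p \<le> coord 2 q}"
      obtain qx qy qw where qq: "q = (qx, qy, qw)" by (cases q) auto
      have b: "\<bar>qx - x\<bar> < e" "\<bar>qy - y\<bar> < e" "\<bar>qw - z1\<bar> < e"
        using ball_coords[of q p e] q qq p by auto
      have "q \<in> box3 a2 b2 c2 d2 z1 z2"
        using q b e unfolding qq p by (auto simp: coord_def abs_less_iff)
      then show "q \<in> ball p e \<inter> P" using q Pd by auto
    qed
    then show "p \<in> flat_points P" using flat_ge[OF e(1), of 2 p P] by simp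
  qed
  have K3: "box3 a3 b3 c3 d3 z1 z3 \<subseteq> P" using s3 zs unfolding Pd by (auto simp: box3_def)
  obtain u1 v1 where w1e: "w1 = (u1, v1)" by (cases w1) auto
  obtain u3 v3 where w3e: "w3 = (u3, v3)" by (cases w3) auto
  have q1: "(u1, v1, z1) \<in> closure S" using clS w1(2) w1e unfolding f_def by auto
  have q3: "(u3, v3, z1) \<in> closure S" using clS w3(2) w3e unfolding f_def by auto
  show GOAL
  proof (rule goalI[OF conn flat])
    show "f d0 \<in> S" unfolding S_def using d0 by auto
    show "z0 < snd (snd (f d0))" "snd (snd (f d0)) < z3" using zs unfolding f_def by auto
    show "\<forall>p\<in>P. \<exists>q\<in>closure S. visible P q p"
    proof
      fix p assume "p \<in> P"
      then consider "p \<in> box3 a1 b1 c1 d1 z0 z1" | "p \<in> box3 a2 b2 c2 d2 z1 z2" | "p \<in> box3 a3 b3 c3 d3 z2 z3"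
        using Pd by auto
      then show "\<exists>q\<in>closure S. visible P q p"
      proof cases
        case 1
        show ?thesis
          by (rule bexI[OF visible_convex[OF _ 1 convex_box3 sub1] q1]) (use w1 w1e zs in auto)
      next
        case 2
        show ?thesis
          by (rule bexI[OF visible_convex[OF _ 2 convex_box3 sub2] q1]) (use w1 w1e s1 zs in auto)
      next
        case 3
        have p3: "p \<in> box3 a3 b3 c3 d3 z1 z3" using 3 zs by (cases p) auto
        show ?thesis
          by (rule bexI[OF visible_convex[OF _ p3 convex_box3 K3] q3]) (use w3 w3e zs in auto)
      qed
    qed
  qed
qed

lemma annulus_top:
  assumes s1: "a2 \<le> a1" "b1 \<le> b2" "c2 \<le> c1" "d1 \<le> d2"
    and s3: "a2 \<le> a3" "b3 \<le> b2" "c2 \<le> c3" "d3 \<le> d2"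
    and conD: "connected D" and Dd: "D = ({a2<..<b2} \<times> {c2<..<d2}) - {a3..b3} \<times> {c3..d3}"
    and w1: "w1 \<in> {a1..b1} \<times> {c1..d1}" "w1 \<in> closure D"
    and w3: "w3 \<in> {a3..b3} \<times> {c3..d3}" "w3 \<in> closure D"
  shows GOAL
proof -
  define f where "f = (\<lambda>w::real\<times>real. (fst w, snd w, z2))"
  have cf: "continuous_on A f" for A unfolding f_def by (intro continuous_intros)
  define S where "S = f ` D"
  have conn: "connected S" unfolding S_def by (rule connected_continuous_image[OF cf conD])
  have clS: "f ` closure D \<subseteq> closure S" unfolding S_def
    by (rule continuous_image_closure_subset[OF cf[of UNIV]]) simp
  have "D \<noteq> {}" using w3(2) by auto
  then obtain d0 where d0: "d0 \<in> D" by auto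
  have cR1: "closed ({a3..b3} \<times> {c3..d3})" by (intro closed_Times) auto
  have flat: "S \<subseteq> flat_points P"
  proof
    fix p assume "p \<in> S"
    then obtain x y where xy: "(x, y) \<in> D" and p: "p = (x, y, z2)" unfolding S_def f_def by auto
    have "(x, y) \<in> - ({a3..b3} \<times> {c3..d3})" using xy Dd by auto
    then obtain e1 where e1: "e1 > 0" "ball (x, y) e1 \<subseteq> - ({a3..b3} \<times> {c3..d3})"
      using cR1 open_contains_ball by (metis open_Compl)
    have xyb: "a2 < x" "x < b2" "c2 < y" "y < d2" using xy Dd by auto
    define e where "e = min e1 (min (min (x - a2) (b2 - x)) (min (min (y - c2) (d2 - y)) (z2 - z1)))"
    have e: "e > 0" "e \<le> e1" "e \<le> x - a2" "e \<le> b2 - x" "e \<le> y - c2" "e \<le> d2 - y" "e \<le> z2 - z1"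
      unfolding e_def using xyb zs e1 by auto
    have "ball p e \<inter> P = ball p e \<inter> {q. coord 2 q \<le> coord 2 p}"
    proof (intro set_eqI iffI)
      fix q assume q: "q \<in> ball p e \<inter> P"
      obtain qx qy qw where qq: "q = (qx, qy, qw)" by (cases q) auto
      have "dist (qx, qy) (x, y) \<le> dist q p" using proj_dist[of q p] qq p by simp
      also have "\<dots> < e" using q by (simp add: dist_commute)
      finally have "(qx, qy) \<in> ball (x, y) e1" using e by (simp add: dist_commute)
      then have nR1: "(qx, qy) \<notin> {a3..b3} \<times> {c3..d3}" using e1 by auto
      show "q \<in> ball p e \<inter> {q. coord 2 q \<le> coord 2 p}"
        using q nR1 zs unfolding qq p Pd by (auto simp: coord_def)
    next
      fix q assume q: "q \<in> ball p e \<inter> {q. coord 2 q \<le> coord 2 p}"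
      obtain qx qy qw where qq: "q = (qx, qy, qw)" by (cases q) auto
      have b: "\<bar>qx - x\<bar> < e" "\<bar>qy - y\<bar> < e" "\<bar>qw - z2\<bar> < e"
        using ball_coords[of q p e] q qq p by auto
      have "q \<in> box3 a2 b2 c2 d2 z1 z2"
        using q b e unfolding qq p by (auto simp: coord_def abs_less_iff)
      then show "q \<in> ball p e \<inter> P" using q Pd by auto
    qed
    then show "p \<in> flat_points P" using flat_le[OF e(1), of 2 p P] by simp
  qed
  have K1: "box3 a1 b1 c1 d1 z0 z2 \<subseteq> P" using s1 zs unfolding Pd by (auto simp: box3_def)
  obtain u1 v1 where w1e: "w1 = (u1, v1)" by (cases w1) auto
  obtain u3 v3 where w3e: "w3 = (u3, v3)" by (cases w3) auto
  have q1: "(u1, v1, z2) \<in> closure S" using clS w1(2) w1e unfolding f_def by auto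
  have q3: "(u3, v3, z2) \<in> closure S" using clS w3(2) w3e unfolding f_def by auto
  show GOAL
  proof (rule goalI[OF conn flat])
    show "f d0 \<in> S" unfolding S_def using d0 by auto
    show "z0 < snd (snd (f d0))" "snd (snd (f d0)) < z3" using zs unfolding f_def by auto
    show "\<forall>p\<in>P. \<exists>q\<in>closure S. visible P q p"
    proof
      fix p assume "p \<in> P"
      then consider "p \<in> box3 a1 b1 c1 d1 z0 z1" | "p \<in> box3 a2 b2 c2 d2 z1 z2" | "p \<in> box3 a3 b3 c3 d3 z2 z3"
        using Pd by auto
      then show "\<exists>q\<in>closure S. visible P q p"
      proof cases
        case 1
        have p1: "p \<in> box3 a1 b1 c1 d1 z0 z2" using 1 zs by (cases p) auto
        show ?thesis
          by (rule bexI[OF visible_convex[OF _ p1 convex_box3 K1] q1]) (use w1 w1e zs in auto)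
      next
        case 2
        show ?thesis
          by (rule bexI[OF visible_convex[OF _ 2 convex_box3 sub2] q3]) (use w3 w3e s3 zs in auto)
      next
        case 3
        show ?thesis
          by (rule bexI[OF visible_convex[OF _ 3 convex_box3 sub3] q3]) (use w3 w3e zs in auto)
      qed
    qed
  qed
qed


lemma side_any:
  assumes "w \<in> {a1..b1} \<times> {c1..d1}" "w \<in> {a3..b3} \<times> {c3..d3}"
    and "w \<in> frontier ({a2..b2} \<times> {c2..d2})"
  shows GOAL
proof -
  obtain x y where w: "w = (x, y)" by (cases w) auto
  have f: "(x, y) \<in> {a2..b2} \<times> {c2..d2}" "\<not> (a2 < x \<and> x < b2 \<and> c2 < y \<and> y < d2)"
    using assms(3) frontier_rect[OF nd(3,4)] w by auto
  then consider "x = a2" | "x = b2" | "y = c2" | "y = d2" by fastforce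
  then show ?thesis
  proof cases
    case 1 then show ?thesis using assms(1,2) f w by (intro side_a[of y y]) auto
  next
    case 2 then show ?thesis using assms(1,2) f w by (intro side_b[of y y]) auto
  next
    case 3 then show ?thesis using assms(1,2) f w by (intro side_c[of x x]) auto
  next
    case 4 then show ?thesis using assms(1,2) f w by (intro side_d[of x x]) auto
  qed
qed

end


theorem mainTheorem10:
  fixes R :: "nat \<Rightarrow> rectc" and z :: "nat \<Rightarrow> real" and P :: "point3 set"
  assumes nd: "\<forall>t \<in> {1,2,3}. nondeg (R t)"
    and zs: "z 0 < z 1" "z 1 < z 2" "z 2 < z 3"
    and P: "P = brick (R 1) (z 0) (z 1) \<union> brick (R 2) (z 1) (z 2) \<union> brick (R 3) (z 2) (z 3)"
    and can: "canonical (R 1) (R 2)" "canonical (R 2) (R 3)"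
    and sig1: "\<not> (\<exists>i \<in> {1..4}. [contact_sym (R 1) (R 2), contact_sym (R 2) (R 3)] = [Cap i, Cap 4])"
    and sig2: "\<not> (\<exists>i \<in> {1..4}. [contact_sym (R 1) (R 2), contact_sym (R 2) (R 3)] = [Cup 4, Cup i])"
  shows "\<exists>F. is_face P F \<and> F \<noteq> brick (R 3) (z 3) (z 3) \<and> F \<noteq> brick (R 1) (z 0) (z 0) \<and> guards P F"
proof -
  obtain a1 b1 c1 d1 where r1: "R 1 = (a1, b1, c1, d1)" by (metis prod_cases4)
  obtain a2 b2 c2 d2 where r2: "R 2 = (a2, b2, c2, d2)" by (metis prod_cases4)
  obtain a3 b3 c3 d3 where r3: "R 3 = (a3, b3, c3, d3)" by (metis prod_cases4)
  have n1: "a1 < b1" "c1 < d1" using nd r1 by (auto simp: nondeg_def)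
  have n2: "a2 < b2" "c2 < d2" using nd r2 by (auto simp: nondeg_def)
  have n3: "a3 < b3" "c3 < d3" using nd r3 by (auto simp: nondeg_def)
  interpret stk a1 b1 c1 d1 a2 b2 c2 d2 a3 b3 c3 d3 "z 0" "z 1" "z 2" "z 3" P
    by unfold_locales (use n1 n2 n3 zs P r1 r2 r3 in \<open>auto simp: brick_eq\<close>)
  define X1 where "X1 = {a1..b1} \<times> {c1..d1}"
  define X2 where "X2 = {a2..b2} \<times> {c2..d2}"
  define X3 where "X3 = {a3..b3} \<times> {c3..d3}"
  have rs: "rset (R 1) = X1" "rset (R 2) = X2" "rset (R 3) = X3"
    using r1 r2 r3 by (simp_all add: X1_def X2_def X3_def)
  have G: "GOAL \<Longrightarrow> ?thesis" using r1 r3 by (simp add: brick_eq)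
  have c1: "(X1 \<subset> X2 \<and> connected (X2 - X1)) \<or> (X2 \<subset> X1 \<and> connected (X1 - X2))"
    using can(1) rs by (simp add: canonical_def)
  have c2: "(X2 \<subset> X3 \<and> connected (X3 - X2)) \<or> (X3 \<subset> X2 \<and> connected (X2 - X3))"
    using can(2) rs by (simp add: canonical_def)
  have cs1: "contact_sym (R 1) (R 2) = (if X1 \<subset> X2 then Cup (ctype (R 1) (R 2)) else Cap (ctype (R 2) (R 1)))"
    using rs by (simp add: contact_sym_def)
  have cs2: "contact_sym (R 2) (R 3) = (if X2 \<subset> X3 then Cup (ctype (R 2) (R 3)) else Cap (ctype (R 3) (R 2)))"
    using rs by (simp add: contact_sym_def)
  show ?thesis
  proof (rule G)
    consider (A) "X1 \<subset> X2" "connected (X2 - X1)" "X3 \<subset> X2" "connected (X2 - X3)"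
      | (B) "X2 \<subset> X1" "X2 \<subset> X3"
      | (C) "X1 \<subset> X2" "X2 \<subset> X3"
      | (D) "X2 \<subset> X1" "X3 \<subset> X2"
      using c1 c2 by blast
    then show GOAL
    proof cases
      case A
      have s1: "a2 \<le> a1" "b1 \<le> b2" "c2 \<le> c1" "d1 \<le> d2"
        using rect_sub[of a1 b1 c1 d1 a2 b2 c2 d2] A(1) n1 unfolding X1_def X2_def by auto
      have s3: "a2 \<le> a3" "b3 \<le> b2" "c2 \<le> c3" "d3 \<le> d2"
        using rect_sub[of a3 b3 c3 d3 a2 b2 c2 d2] A(3) n3 unfolding X3_def X2_def by auto
      have cX1: "closed X1" unfolding X1_def by (intro closed_Times closed_atLeastAtMost)
      have cX3: "closed X3" unfolding X3_def by (intro closed_Times closed_atLeastAtMost)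
      show GOAL
      proof (cases "\<not> X3 \<subseteq> X1 \<or> X3 = X1")
        case True
        have conD: "connected (({a2<..<b2} \<times> {c2<..<d2}) - X1)"
          using conn_D[OF n2 n1 s1] A(2) unfolding X1_def X2_def by simp
        obtain w1 where w1: "w1 \<in> X1" "w1 \<in> closure (({a2<..<b2} \<times> {c2<..<d2}) - X1)"
          using meet_D[of a2 b2 c2 d2 a1 b1 c1 d1] n1 n2 A(1) unfolding X1_def X2_def by auto
        obtain w3 where w3: "w3 \<in> X3" "w3 \<in> closure (({a2<..<b2} \<times> {c2<..<d2}) - X1)"
        proof (cases "X3 = X1")
          case True then show ?thesis using that w1 by auto
        next
          case False
          then obtain w where "w \<in> X3" "w \<notin> X1" using \<open>\<not> X3 \<subseteq> X1 \<or> X3 = X1\<close> by auto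
          moreover have "w \<in> X2" using \<open>w \<in> X3\<close> A(3) by auto
          ultimately show ?thesis using that clos_D[OF n2 cX1, of w] unfolding X2_def by auto
        qed
        show GOAL
          by (rule annulus_bot[OF s1 s3 conD _ _ w1(2) _ w3(2)]) (use w1 w3 in \<open>auto simp: X1_def X3_def\<close>)
      next
        case False
        then have A3: "X3 \<subset> X1" by auto
        have conD: "connected (({a2<..<b2} \<times> {c2<..<d2}) - X3)"
          using conn_D[OF n2 n3 s3] A(4) unfolding X3_def X2_def by simp
        obtain w3 where w3: "w3 \<in> X3" "w3 \<in> closure (({a2<..<b2} \<times> {c2<..<d2}) - X3)"
          using meet_D[of a2 b2 c2 d2 a3 b3 c3 d3] n3 n2 A(3) unfolding X3_def X2_def by auto
        obtain w1 where w1: "w1 \<in> X1" "w1 \<notin> X3" using A3 by auto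
        have "w1 \<in> X2" using w1 A(1) by auto
        then have w1c: "w1 \<in> closure (({a2<..<b2} \<times> {c2<..<d2}) - X3)"
          using clos_D[OF n2 cX3, of w1] w1 unfolding X2_def by auto
        show GOAL
          by (rule annulus_top[OF s1 s3 conD _ _ w1c _ w3(2)]) (use w1 w3 in \<open>auto simp: X1_def X3_def\<close>)
      qed
    next
      case B
      have s1: "a1 \<le> a2" "b2 \<le> b1" "c1 \<le> c2" "d2 \<le> d1"
        using rect_sub[of a2 b2 c2 d2 a1 b1 c1 d1] B(1) n2 unfolding X1_def X2_def by auto
      have s3: "a3 \<le> a2" "b2 \<le> b3" "c3 \<le> c2" "d2 \<le> d3"
        using rect_sub[of a2 b2 c2 d2 a3 b3 c3 d3] B(2) n2 unfolding X3_def X2_def by auto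
      show GOAL by (rule side_a[of c2 c2]) (use s1 s3 n2 in auto)
    next
      case C
      have k: "ctype (R 2) (R 3) \<in> {1..4}"
        using ctype_not0[of a2 b2 c2 d2 a3 b3 c3 d3] n2 n3 C(2) ctype_le4[of "R 2" "R 3"] r2 r3
        unfolding X2_def X3_def by fastforce
      have "ctype (R 1) (R 2) \<noteq> 4"
      proof
        assume "ctype (R 1) (R 2) = 4"
        then show False using sig2 k cs1 cs2 C by auto
      qed
      then obtain w where w: "w \<in> X1" "w \<in> frontier X2"
        using ctype_not4[of a1 b1 c1 d1 "R 2"] n1 r1 rs unfolding X1_def by auto
      have "w \<in> X2" using w(2) frontier_rect[OF n2] unfolding X2_def by auto
      then have "w \<in> X3" using C(2) by auto
      then show GOAL using side_any w unfolding X1_def X2_def X3_def by auto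
    next
      case D
      have nc: "\<not> X1 \<subset> X2" "\<not> X2 \<subset> X3" using D by auto
      have k: "ctype (R 2) (R 1) \<in> {1..4}"
        using ctype_not0[of a2 b2 c2 d2 a1 b1 c1 d1] n2 n1 D(1) ctype_le4[of "R 2" "R 1"] r2 r1
        unfolding X2_def X1_def by fastforce
      have "ctype (R 3) (R 2) \<noteq> 4"
      proof
        assume "ctype (R 3) (R 2) = 4"
        then show False using sig1 k cs1 cs2 nc by auto
      qed
      then obtain w where w: "w \<in> X3" "w \<in> frontier X2"
        using ctype_not4[of a3 b3 c3 d3 "R 2"] n3 r3 rs unfolding X3_def by auto
      have "w \<in> X2" using w(2) frontier_rect[OF n2] unfolding X2_def by auto
      then have "w \<in> X1" using D(1) by auto
      then show GOAL using side_any w unfolding X1_def X2_def X3_def by auto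
    qed
  qed
qed

end
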